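(* Let $\alpha\ge0$, $\gamma'<0$, $\omega'>0$, and let $f:\mathbb{R}^2\to\mathbb{R}^2$ be the (transformed) Duffing van der Pol vector field $$f(x,y)=\big(\omega' y-\tfrac{\alpha}{3}x^3+\gamma' x,\;-\omega' x-y\big).$$ Let $N\ge3$ and consider the bidirectional ring network $\dot{z}_i=f(z_i)+A_{i+1,i}(z_{i+1}-z_i)+A_{i-1,i}(z_{i-1}-z_i)$, $i=1,\dots,N$ (indices modulo $N$), with balanced (interactional) couplings $A_{i,j}=A_{j,i}$ (real $2\times 2$ matrices). If $(A_{i,i+1})_s\succ0$ for all $i$, then for every initial condition $\|z_i(t)-z_j(t)\|\to0$ exponentially as $t\to\infty$ for all $i,j$.
   Context: This vector field arises from the Duffing van der Pol equation $\ddot{x}+(\alpha x^2-\gamma)\dot{x}+(\omega^2+\varepsilon x^2)x=0$ with $\varepsilon=\alpha/3$, $-(\omega^2+1)<\gamma<-1$, $\gamma'=\gamma+1$, $\omega'=\sqrt{\omega^2+\gamma'}$, and $y=\frac1{\omega'}(\dot x+\frac\alpha3x^3-\gamma' x)$. For a square matrix $M$, $M_s=\tfrac12(M+M^T)$; $\succ0$ means positive definite. *)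

theory Defs
  imports "HOL-Analysis.Analysis"
begin

definition dvdp_field :: "real \<Rightarrow> real \<Rightarrow> real \<Rightarrow> real^2 \<Rightarrow> real^2" where
  "dvdp_field \<alpha> \<gamma>' \<omega>' v =
     vector [\<omega>' * v$2 - \<alpha> / 3 * (v$1)^3 + \<gamma>' * v$1,
             - \<omega>' * v$1 - v$2]"

definition sym_part :: "real^'n^'n \<Rightarrow> real^'n^'n" where
  "sym_part M = (1/2) *\<^sub>R (M + transpose M)"

definition pos_def :: "real^'n^'n \<Rightarrow> bool" where
  "pos_def M \<longleftrightarrow> (\<forall>v. v \<noteq> 0 \<longrightarrow> v \<bullet> (M *v v) > 0)"

text \<open>Right-hand side of node i (0-based, indices mod N) of the bidirectional ring network.\<close>
definition ring_rhs ::
  "(real^2 \<Rightarrow> real^2) \<Rightarrow> nat \<Rightarrow> (nat \<Rightarrow> nat \<Rightarrow> real^2^2) \<Rightarrow> (nat \<Rightarrow> real^2) \<Rightarrow> nat \<Rightarrow> real^2" where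
  "ring_rhs f N A z i =
     f (z i) + A ((i + 1) mod N) i *v (z ((i + 1) mod N) - z i)
             + A ((i + N - 1) mod N) i *v (z ((i + N - 1) mod N) - z i)"

end

theory Submission imports Defs begin

lemma contr:
  assumes "\<alpha> \<ge> 0" "\<gamma>' < 0"
  shows "(u - v) \<bullet> (dvdp_field \<alpha> \<gamma>' \<omega>' u - dvdp_field \<alpha> \<gamma>' \<omega>' v)
     \<le> - min (-\<gamma>') 1 * norm (u - v)^2"
proof -
  define a where "a = u$1" define b where "b = v$1"
  define p where "p = u$2" define q where "q = v$2"
  have n: "norm (u - v)^2 = (a-b)^2 + (p-q)^2"
    unfolding power2_norm_eq_inner inner_vec_def sum_2 a_def b_def p_def q_def
    by (simp add: power2_eq_square)
  have l: "(u - v) \<bullet> (dvdp_field \<alpha> \<gamma>' \<omega>' u - dvdp_field \<alpha> \<gamma>' \<omega>' v)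
     = - \<alpha>/3 * ((a-b) * (a^3-b^3)) + \<gamma>' * (a-b)^2 - (p-q)^2"
    unfolding inner_vec_def sum_2 a_def b_def p_def q_def dvdp_field_def
    by (simp add: field_simps power2_eq_square)
  have c: "(a-b) * (a^3-b^3) \<ge> 0"
  proof -
    have "(a-b) * (a^3-b^3) = (a-b)^2 * ((a + b/2)^2 + 3/4*b^2)"
      by (simp add: algebra_simps power2_eq_square power3_eq_cube)
    thus ?thesis by simp
  qed
  have m1: "min (-\<gamma>') 1 \<le> -\<gamma>'" "min (-\<gamma>') 1 \<le> 1" by auto
  have "\<gamma>' * (a-b)^2 \<le> - min (-\<gamma>') 1 * (a-b)^2"
    using mult_right_mono[OF m1(1), of "(a-b)^2"] by simp
  moreover have "-((p-q)^2) \<le> - min (-\<gamma>') 1 * (p-q)^2"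
    using mult_right_mono[OF m1(2), of "(p-q)^2"] by simp
  moreover have "\<alpha>/3 * ((a-b) * (a^3-b^3)) \<ge> 0" using c assms by simp
  ultimately show ?thesis unfolding l n by (simp add: algebra_simps)
qed

lemma reidx:
  fixes g :: "nat \<Rightarrow> nat \<Rightarrow> 'a::comm_monoid_add"
  assumes "N > 0"
  shows "(\<Sum>i<N. g ((i + N - 1) mod N) i) = (\<Sum>k<N. g k ((k + 1) mod N))"
proof -
  let ?h = "\<lambda>k. (k + 1) mod N"
  have hm: "(k + 1) mod N = (if k + 1 = N then 0 else k + 1)" if "k < N" for k
    using that by auto
  have bij: "bij_betw ?h {..<N} {..<N}"
  proof (rule bij_betw_imageI)
    show "inj_on ?h {..<N}"
    proof (rule inj_onI)
      fix x y assume "x \<in> {..<N}" "y \<in> {..<N}" "?h x = ?h y"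
      then show "x = y" using hm[of x] hm[of y] by (auto split: if_splits)
    qed
    show "?h ` {..<N} = {..<N}"
    proof
      show "?h ` {..<N} \<subseteq> {..<N}" using assms by auto
      show "{..<N} \<subseteq> ?h ` {..<N}"
      proof
        fix i assume i: "i \<in> {..<N}"
        show "i \<in> ?h ` {..<N}"
        proof (cases i)
          case 0 thus ?thesis using assms by (intro image_eqI[of _ _ "N - 1"]) auto
        next
          case (Suc k) thus ?thesis using i by (intro image_eqI[of _ _ k]) auto
        qed
      qed
    qed
  qed
  have e: "((Suc k) mod N + N - Suc 0) mod N = k" if "k < N" for k
  proof (cases "k + 1 < N")
    case True thus ?thesis using that by simp
  next
    case False then have "k + 1 = N" using that by simp
    thus ?thesis using that by simp
  qed
  have "(\<Sum>i<N. g ((i + N - 1) mod N) i) = (\<Sum>k<N. g (((k+1) mod N + N - 1) mod N) ((k + 1) mod N))"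
    using sum.reindex_bij_betw[OF bij, of "\<lambda>i. g ((i + N - 1) mod N) i"] by simp
  also have "\<dots> = (\<Sum>k<N. g k ((k + 1) mod N))" by (rule sum.cong) (auto simp: e)
  finally show ?thesis .
qed

lemma psd_of_posdef:
  fixes M :: "real^2^2"
  assumes "pos_def (sym_part M)"
  shows "v \<bullet> (M *v v) \<ge> 0"
proof (cases "v = 0")
  case True thus ?thesis by simp
next
  case False
  have "v \<bullet> (sym_part M *v v) = v \<bullet> (M *v v)"
    unfolding sym_part_def inner_vec_def matrix_vector_mult_def transpose_def sum_2
    by (simp add: algebra_simps)
  thus ?thesis using assms False unfolding pos_def_def by force
qed

definition cp :: "nat \<Rightarrow> (nat \<Rightarrow> nat \<Rightarrow> real^2^2) \<Rightarrow> (nat \<Rightarrow> real^2) \<Rightarrow> nat \<Rightarrow> real^2" where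
  "cp N A x i = A ((i + 1) mod N) i *v (x ((i + 1) mod N) - x i)
             + A ((i + N - 1) mod N) i *v (x ((i + N - 1) mod N) - x i)"

lemma ring_cp: "ring_rhs f N A x i = f (x i) + cp N A x i"
  unfolding ring_rhs_def cp_def by (simp add: add.assoc)

lemma sum_cp:
  assumes N: "N > 0" and bal: "\<And>i j. i < N \<Longrightarrow> j < N \<Longrightarrow> A i j = A j i"
  shows "(\<Sum>i<N. cp N A x i) = 0"
proof -
  have "(\<Sum>i<N. A ((i + N - 1) mod N) i *v (x ((i + N - 1) mod N) - x i))
      = (\<Sum>k<N. A k ((k + 1) mod N) *v (x k - x ((k + 1) mod N)))"
    using reidx[OF N, of "\<lambda>k i. A k i *v (x k - x i)"] by simp
  also have "\<dots> = (\<Sum>k<N. - (A ((k + 1) mod N) k *v (x ((k + 1) mod N) - x k)))"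
  proof (rule sum.cong)
    fix k assume "k \<in> {..<N}"
    then have "A k ((k + 1) mod N) = A ((k + 1) mod N) k" using bal N by simp
    thus "A k ((k + 1) mod N) *v (x k - x ((k + 1) mod N)) = - (A ((k + 1) mod N) k *v (x ((k + 1) mod N) - x k))"
      by (simp add: matrix_vector_mult_diff_distrib)
  qed simp
  finally show ?thesis unfolding cp_def sum.distrib by (simp add: sum_negf)
qed

lemma sum_xcp:
  assumes N: "N > 0" and bal: "\<And>i j. i < N \<Longrightarrow> j < N \<Longrightarrow> A i j = A j i"
    and pd: "\<And>i. i < N \<Longrightarrow> pos_def (sym_part (A i ((i + 1) mod N)))"
  shows "(\<Sum>i<N. x i \<bullet> cp N A x i) \<le> 0"
proof -
  have "(\<Sum>i<N. x i \<bullet> (A ((i + N - 1) mod N) i *v (x ((i + N - 1) mod N) - x i)))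
      = (\<Sum>k<N. x ((k + 1) mod N) \<bullet> (A k ((k + 1) mod N) *v (x k - x ((k + 1) mod N))))"
    using reidx[OF N, of "\<lambda>k i. x i \<bullet> (A k i *v (x k - x i))"] by simp
  then have "(\<Sum>i<N. x i \<bullet> cp N A x i) = (\<Sum>k<N. x k \<bullet> (A ((k + 1) mod N) k *v (x ((k + 1) mod N) - x k))
      + x ((k + 1) mod N) \<bullet> (A k ((k + 1) mod N) *v (x k - x ((k + 1) mod N))))"
    unfolding cp_def inner_add_right sum.distrib by simp
  also have "\<dots> = (\<Sum>k<N. - ((x ((k + 1) mod N) - x k) \<bullet> (A k ((k + 1) mod N) *v (x ((k + 1) mod N) - x k))))"
  proof (rule sum.cong)
    fix k assume "k \<in> {..<N}"
    then have "A k ((k + 1) mod N) = A ((k + 1) mod N) k" using bal N by simp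
    thus "x k \<bullet> (A ((k + 1) mod N) k *v (x ((k + 1) mod N) - x k))
      + x ((k + 1) mod N) \<bullet> (A k ((k + 1) mod N) *v (x k - x ((k + 1) mod N)))
      = - ((x ((k + 1) mod N) - x k) \<bullet> (A k ((k + 1) mod N) *v (x ((k + 1) mod N) - x k)))"
      by (simp add: matrix_vector_mult_diff_distrib inner_diff_left inner_diff_right)
  qed simp
  also have "\<dots> \<le> 0"
    by (rule sum_nonpos) (use psd_of_posdef pd in auto)
  finally show ?thesis .
qed

lemma dbl_ident:
  fixes x c :: "nat \<Rightarrow> real^2"
  assumes "(\<Sum>i<N. c i) = 0"
  shows "(\<Sum>i<N. \<Sum>j<N. (x i - x j) \<bullet> (c i - c j)) = 2 * real N * (\<Sum>i<N. x i \<bullet> c i)"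
proof -
  have a: "(\<Sum>i<N. \<Sum>j<N. x i \<bullet> c j) = 0"
    using assms by (simp add: inner_sum_right[symmetric])
  have b: "(\<Sum>i<N. \<Sum>j<N. x j \<bullet> c i) = 0"
    using assms by (simp add: inner_sum_left[symmetric] inner_sum_right[symmetric])
  have "(\<Sum>i<N. \<Sum>j<N. (x i - x j) \<bullet> (c i - c j)) =
     (\<Sum>i<N. \<Sum>j<N. x i \<bullet> c i) - (\<Sum>i<N. \<Sum>j<N. x i \<bullet> c j)
     - (\<Sum>i<N. \<Sum>j<N. x j \<bullet> c i) + (\<Sum>i<N. \<Sum>j<N. x j \<bullet> c j)"
    by (simp add: inner_diff_left inner_diff_right sum_subtractf sum.distrib)
  also have "\<dots> = 2 * real N * (\<Sum>i<N. x i \<bullet> c i)"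
    unfolding a b by (simp add: sum.swap[of _ "{..<N}" "{..<N}"] sum_distrib_left[symmetric])
  finally show ?thesis .
qed

lemma net_ineq:
  assumes "\<alpha> \<ge> 0" "\<gamma>' < 0" and N: "N > 0"
    and bal: "\<And>i j. i < N \<Longrightarrow> j < N \<Longrightarrow> A i j = A j i"
    and pd: "\<And>i. i < N \<Longrightarrow> pos_def (sym_part (A i ((i + 1) mod N)))"
  shows "(\<Sum>i<N. \<Sum>j<N. (x i - x j) \<bullet> (ring_rhs (dvdp_field \<alpha> \<gamma>' \<omega>') N A x i - ring_rhs (dvdp_field \<alpha> \<gamma>' \<omega>') N A x j))
    \<le> - min (-\<gamma>') 1 * (\<Sum>i<N. \<Sum>j<N. norm (x i - x j)^2)"
proof -
  let ?f = "dvdp_field \<alpha> \<gamma>' \<omega>'"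
  let ?c = "cp N A x"
  have split: "(\<Sum>i<N. \<Sum>j<N. (x i - x j) \<bullet> (ring_rhs ?f N A x i - ring_rhs ?f N A x j))
     = (\<Sum>i<N. \<Sum>j<N. (x i - x j) \<bullet> (?f (x i) - ?f (x j)))
     + (\<Sum>i<N. \<Sum>j<N. (x i - x j) \<bullet> (?c i - ?c j))"
  proof -
    have "(\<Sum>i<N. \<Sum>j<N. (x i - x j) \<bullet> (ring_rhs ?f N A x i - ring_rhs ?f N A x j))
       = (\<Sum>i<N. \<Sum>j<N. (x i - x j) \<bullet> (?f (x i) - ?f (x j)) + (x i - x j) \<bullet> (?c i - ?c j))"
      by (intro sum.cong refl) (simp add: ring_cp inner_diff_right inner_add_right)
    thus ?thesis by (simp add: sum.distrib)
  qed
  have "(\<Sum>i<N. \<Sum>j<N. (x i - x j) \<bullet> (?c i - ?c j)) = 2 * real N * (\<Sum>i<N. x i \<bullet> ?c i)"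
    by (rule dbl_ident[OF sum_cp[of N A x, OF N bal]])
  also have "\<dots> \<le> 0" using sum_xcp[of N A x, OF N bal pd] by (simp add: mult_nonneg_nonpos)
  finally have c2: "(\<Sum>i<N. \<Sum>j<N. (x i - x j) \<bullet> (?c i - ?c j)) \<le> 0" .
  have c1: "(\<Sum>i<N. \<Sum>j<N. (x i - x j) \<bullet> (?f (x i) - ?f (x j)))
       \<le> (\<Sum>i<N. \<Sum>j<N. - min (-\<gamma>') 1 * norm (x i - x j)^2)"
    by (intro sum_mono contr assms)
  show ?thesis unfolding split using c1 c2 by (simp add: sum_distrib_left)
qed

lemma gronwall_exp:
  fixes V V' :: "real \<Rightarrow> real"
  assumes d: "\<And>t. t \<ge> 0 \<Longrightarrow> (V has_real_derivative V' t) (at t within {0..})"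
    and le: "\<And>t. t \<ge> 0 \<Longrightarrow> V' t \<le> - k * V t"
    and t: "t \<ge> 0"
  shows "V t \<le> V 0 * exp (- k * t)"
proof -
  let ?W = "\<lambda>s. V s * exp (k * s)"
  let ?W' = "\<lambda>s. V' s * exp (k * s) + V s * (k * exp (k * s))"
  have dW: "(?W has_real_derivative ?W' s) (at s within {0..t})" if "0 \<le> s" "s \<le> t" for s
  proof -
    have "(?W has_real_derivative ?W' s) (at s within {0..})"
      using d[OF that(1)] by (auto intro!: derivative_eq_intros)
    thus ?thesis by (rule DERIV_subset) auto
  qed
  obtain x where x: "x \<in> {0..t}" "?W t - ?W 0 = ?W' x * (t - 0)"
  proof -
    have "\<exists>x\<in>{0..t}. ?W t - ?W 0 = ?W' x * (t - 0)"
      by (rule mvt_very_simple[OF t, of ?W "\<lambda>s h. ?W' s * h"])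
         (use dW in \<open>auto simp: has_field_derivative_def\<close>)
    thus ?thesis using that by blast
  qed
  have "?W' x = (V' x + k * V x) * exp (k * x)" by (simp add: algebra_simps)
  also have "\<dots> \<le> 0" using le[of x] x(1) by (intro mult_nonpos_nonneg) auto
  finally have "?W' x * (t - 0) \<le> 0" using t by (simp add: mult_nonpos_nonneg)
  then have "?W t \<le> ?W 0" using x(2) by linarith
  then have "V t * exp (k * t) * exp (- k * t) \<le> V 0 * exp (- k * t)"
    by (simp add: mult_right_mono)
  thus ?thesis by (simp add: mult.assoc exp_add[symmetric])
qed

theorem theorem4p3:
  fixes \<alpha> \<gamma>' \<omega>' :: real and N :: nat
    and A :: "nat \<Rightarrow> nat \<Rightarrow> real^2^2"
    and z :: "real \<Rightarrow> nat \<Rightarrow> real^2"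
  assumes "\<alpha> \<ge> 0" and "\<gamma>' < 0" and "\<omega>' > 0" and "N \<ge> 3"
    and balanced: "\<And>i j. i < N \<Longrightarrow> j < N \<Longrightarrow> A i j = A j i"
    and posdef: "\<And>i. i < N \<Longrightarrow> pos_def (sym_part (A i ((i + 1) mod N)))"
    and sol: "\<And>i t. i < N \<Longrightarrow> t \<ge> 0 \<Longrightarrow>
       ((\<lambda>s. z s i) has_vector_derivative ring_rhs (dvdp_field \<alpha> \<gamma>' \<omega>') N A (z t) i)
         (at t within {0..})"
  shows "\<exists>C r. r > 0 \<and> (\<forall>i<N. \<forall>j<N. \<forall>t\<ge>0. norm (z t i - z t j) \<le> C * exp (- r * t))"
proof -
  have N: "N > 0" using assms by simp
  define m where "m = min (-\<gamma>') 1"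
  have m: "m > 0" using assms unfolding m_def by simp
  let ?R = "ring_rhs (dvdp_field \<alpha> \<gamma>' \<omega>') N A"
  define V where "V s = (\<Sum>i<N. \<Sum>j<N. norm (z s i - z s j)^2)" for s
  define V' where "V' s = 2 * (\<Sum>i<N. \<Sum>j<N. (z s i - z s j) \<bullet> (?R (z s) i - ?R (z s) j))" for s
  have d: "(V has_real_derivative V' t) (at t within {0..})" if t: "t \<ge> 0" for t
  proof -
    have zd: "((\<lambda>s. z s i) has_derivative (\<lambda>h. h *\<^sub>R ?R (z t) i)) (at t within {0..})" if "i < N" for i
      using sol[OF that t] unfolding has_vector_derivative_def .
    have "((\<lambda>s. \<Sum>i<N. \<Sum>j<N. (z s i - z s j) \<bullet> (z s i - z s j)) has_derivative
       (\<lambda>h. \<Sum>i<N. \<Sum>j<N. (z t i - z t j) \<bullet> (h *\<^sub>R ?R (z t) i - h *\<^sub>R ?R (z t) j)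
            + (h *\<^sub>R ?R (z t) i - h *\<^sub>R ?R (z t) j) \<bullet> (z t i - z t j))) (at t within {0..})"
      by (intro has_derivative_sum has_derivative_inner has_derivative_diff zd) auto
    moreover have "(\<lambda>h. \<Sum>i<N. \<Sum>j<N. (z t i - z t j) \<bullet> (h *\<^sub>R ?R (z t) i - h *\<^sub>R ?R (z t) j)
            + (h *\<^sub>R ?R (z t) i - h *\<^sub>R ?R (z t) j) \<bullet> (z t i - z t j)) = (*) (V' t)"
    proof
      fix h
      have "(\<Sum>i<N. \<Sum>j<N. (z t i - z t j) \<bullet> (h *\<^sub>R ?R (z t) i - h *\<^sub>R ?R (z t) j)
            + (h *\<^sub>R ?R (z t) i - h *\<^sub>R ?R (z t) j) \<bullet> (z t i - z t j))
          = (\<Sum>i<N. \<Sum>j<N. h * (2 * ((z t i - z t j) \<bullet> (?R (z t) i - ?R (z t) j))))"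
        by (intro sum.cong refl)
           (simp add: scaleR_diff_right[symmetric] inner_commute[of "z t _ - z t _"])
      also have "\<dots> = V' t * h"
        unfolding V'_def sum_distrib_left sum_distrib_right by (simp only: mult_ac)
      finally show "(\<Sum>i<N. \<Sum>j<N. (z t i - z t j) \<bullet> (h *\<^sub>R ?R (z t) i - h *\<^sub>R ?R (z t) j)
            + (h *\<^sub>R ?R (z t) i - h *\<^sub>R ?R (z t) j) \<bullet> (z t i - z t j)) = V' t * h" .
    qed
    moreover have "V = (\<lambda>s. \<Sum>i<N. \<Sum>j<N. (z s i - z s j) \<bullet> (z s i - z s j))"
      unfolding V_def by (simp add: power2_norm_eq_inner)
    ultimately show ?thesis unfolding has_field_derivative_def by simp
  qed
  have le: "V' t \<le> - (2 * m) * V t" if "t \<ge> 0" for t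
    using net_ineq[of \<alpha> \<gamma>' N A "z t" \<omega>', OF assms(1,2) N balanced posdef]
    unfolding V'_def V_def m_def by simp
  have V0: "V 0 \<ge> 0" unfolding V_def by (intro sum_nonneg) auto
  show ?thesis
  proof (intro exI conjI allI impI)
    show "m > 0" by (rule m)
    fix i j t assume ij: "i < N" "j < N" and t: "(t::real) \<ge> 0"
    have "norm (z t i - z t j)^2 \<le> (\<Sum>j<N. norm (z t i - z t j)^2)"
      by (rule member_le_sum) (use ij in auto)
    also have "\<dots> \<le> V t" unfolding V_def
      by (rule member_le_sum[of i _ "\<lambda>i. \<Sum>j<N. norm (z t i - z t j)^2"]) (use ij in \<open>auto intro: sum_nonneg\<close>)
    also have "\<dots> \<le> V 0 * exp (- (2 * m) * t)"
      by (rule gronwall_exp[OF d le t])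
    also have "\<dots> = (sqrt (V 0) * exp (- m * t))^2"
      using V0 by (simp add: power_mult_distrib exp_double[symmetric] power2_eq_square[of "exp _"] exp_add[symmetric])
    finally show "norm (z t i - z t j) \<le> sqrt (V 0) * exp (- m * t)"
      by (rule power2_le_imp_le) (use V0 in simp)
  qed
qed

end
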